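(* Let $f:\mathbb{R}^n\times\mathbb{R}^p\to[-\infty,\infty]$ be a proper nearly convex function and $F:\mathbb{R}^n\rightrightarrows\mathbb{R}^p$ a nearly convex set-valued mapping with $\operatorname{ri}(\operatorname{dom} f)\cap\operatorname{ri}(\operatorname{gph} F)\neq\emptyset$, and let $\mu(x)=\inf\{f(x,y):y\in F(x)\}$. Then for all $w\in\mathbb{R}^n$, $$\mu^*(w)=(f^*\square F^* )(w,0)=\inf\{f^*(w_1,v_1)+F^*(w_2,v_2): w_1+w_2=w,\ v_1+v_2=0\}.$$ Moreover, if $\mu^*(w)\in\mathbb{R}$, there exist $w_1,w_2\in\mathbb{R}^n$ with $w_1+w_2=w$ and $v\in\mathbb{R}^p$ such that $\mu^*(w)=f^*(w_1,v)+F^*(w_2,-v)$.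
   Context: A set $\Omega$ is nearly convex if there is a convex set $C$ with $C\subset\Omega\subset\overline{C}$; $\operatorname{ri}\Omega=\{a\in\Omega:\exists\delta>0,\ B(a;\delta)\cap\operatorname{aff}\Omega\subset\Omega\}$. A function is nearly convex if its epigraph is nearly convex, proper if its domain $\{f<\infty\}$ is nonempty and $f>-\infty$; a set-valued mapping is nearly convex if its graph $\operatorname{gph}F=\{(x,y):y\in F(x)\}$ is. Fenchel conjugate: $f^*(z)=\sup_x\{\langle z,x\rangle-f(x)\}$. Fenchel conjugate of a set-valued mapping: $F^*(u,v)=\sigma_{\operatorname{gph}F}(u,v)=\sup\{\langle u,x\rangle+\langle v,y\rangle:(x,y)\in\operatorname{gph}F\}$. Infimal convolution: $(g\square h)(z)=\inf\{g(z_1)+h(z_2):z_1+z_2=z\}$. *)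

theory Defs
  imports "HOL-Analysis.Analysis"
begin

definition nearly_convex :: "'a::real_normed_vector set \<Rightarrow> bool" where
  "nearly_convex S \<longleftrightarrow> (\<exists>C. convex C \<and> C \<subseteq> S \<and> S \<subseteq> closure C)"

definition epi :: "('a \<Rightarrow> ereal) \<Rightarrow> ('a \<times> real) set" where
  "epi f = {(x, t). f x \<le> ereal t}"

definition edom :: "('a \<Rightarrow> ereal) \<Rightarrow> 'a set" where
  "edom f = {x. f x < \<infinity>}"

definition proper_fun :: "('a \<Rightarrow> ereal) \<Rightarrow> bool" where
  "proper_fun f \<longleftrightarrow> edom f \<noteq> {} \<and> (\<forall>x. f x > -\<infinity>)"

definition nearly_convex_fun :: "('a::real_normed_vector \<Rightarrow> ereal) \<Rightarrow> bool" where
  "nearly_convex_fun f \<longleftrightarrow> nearly_convex (epi f)"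

definition gph :: "('a \<Rightarrow> 'b set) \<Rightarrow> ('a \<times> 'b) set" where
  "gph F = {(x, y). y \<in> F x}"

definition fconj :: "('a::real_inner \<Rightarrow> ereal) \<Rightarrow> 'a \<Rightarrow> ereal" where
  "fconj f z = (SUP x. ereal (z \<bullet> x) - f x)"

definition sv_conj :: "('a::real_inner \<Rightarrow> 'b::real_inner set) \<Rightarrow> 'a \<times> 'b \<Rightarrow> ereal" where
  "sv_conj F uv = (SUP xy \<in> gph F. ereal (uv \<bullet> xy))"

definition infconv :: "('a::ab_group_add \<Rightarrow> ereal) \<Rightarrow> ('a \<Rightarrow> ereal) \<Rightarrow> 'a \<Rightarrow> ereal" where
  "infconv g h z = (INF p \<in> {(z1, z2). z1 + z2 = z}. g (fst p) + h (snd p))"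

end

theory Submission
  imports Defs
begin

lemma ri_min_const:
  fixes S :: "'a::euclidean_space set"
  assumes x0: "x0 \<in> rel_interior S" and mn: "\<forall>x\<in>S. y \<bullet> x0 \<le> y \<bullet> x" and x: "x \<in> S"
  shows "y \<bullet> x = y \<bullet> x0"
proof (cases "x = x0")
  case True then show ?thesis by simp
next
  case False
  obtain e where e: "e > 0" "ball x0 e \<inter> affine hull S \<subseteq> S"
    using x0 mem_rel_interior_ball by blast
  have x0S: "x0 \<in> S" using x0 rel_interior_subset by blast
  define t where "t = e / (2 * norm (x - x0))"
  have np: "norm (x - x0) > 0" using False by simp
  have t: "t > 0" using e np by (simp add: t_def)
  define q where "q = (1 + t) *\<^sub>R x0 + (- t) *\<^sub>R x"
  have "q \<in> affine hull S"
    unfolding q_def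
    by (rule mem_affine[OF affine_affine_hull]) (use x x0S hull_inc in auto)
  moreover have "dist x0 q < e"
  proof -
    have "x0 - q = t *\<^sub>R (x - x0)" by (simp add: q_def algebra_simps)
    then have "dist x0 q = t * norm (x - x0)" using t by (simp add: dist_norm)
    also have "\<dots> = e / 2" using np by (simp add: t_def)
    finally show ?thesis using e by simp
  qed
  ultimately have "q \<in> S" using e by auto
  then have "y \<bullet> x0 \<le> y \<bullet> q" using mn by blast
  then have "y \<bullet> x0 \<le> (1 + t) * (y \<bullet> x0) - t * (y \<bullet> x)"
    by (simp add: q_def inner_add_right inner_diff_right)
  then have "t * (y \<bullet> x) \<le> t * (y \<bullet> x0)" by (simp add: algebra_simps)
  then have "y \<bullet> x \<le> y \<bullet> x0" using t by simp
  moreover have "y \<bullet> x0 \<le> y \<bullet> x" using mn x by blast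
  ultimately show ?thesis by linarith
qed

lemma weak_dual:
  fixes f :: "'a::euclidean_space \<Rightarrow> ereal"
  assumes fin: "\<And>x. f x > -\<infinity>" and zz: "z1 + z2 = z"
  shows "(SUP u\<in>G. ereal (z \<bullet> u) - f u) \<le> fconj f z1 + (SUP u\<in>G. ereal (z2 \<bullet> u))"
proof (rule SUP_least)
  fix u assume u: "u \<in> G"
  show "ereal (z \<bullet> u) - f u \<le> fconj f z1 + (SUP u\<in>G. ereal (z2 \<bullet> u))"
  proof (cases "f u")
    case (real r)
    have "ereal (z \<bullet> u) - f u = (ereal (z1 \<bullet> u) - f u) + ereal (z2 \<bullet> u)"
      using zz real by (auto simp: inner_add_left)
    also have "\<dots> \<le> fconj f z1 + (SUP u\<in>G. ereal (z2 \<bullet> u))"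
      apply (rule add_mono)
      unfolding fconj_def apply (rule SUP_upper, simp)
      using u by (rule SUP_upper)
    finally show ?thesis .
  next
    case PInf then show ?thesis by simp
  next
    case MInf then show ?thesis using fin[of u] by simp
  qed
qed

lemma main_exact:
  fixes f :: "'a::euclidean_space \<Rightarrow> ereal" and G :: "'a set"
  assumes fin: "\<And>x. f x > -\<infinity>" and ncf: "nearly_convex (epi f)" and ncG: "nearly_convex G"
    and u0f: "u0 \<in> rel_interior (edom f)" and u0G: "u0 \<in> rel_interior G"
    and al: "\<alpha> = (SUP u\<in>G. ereal (z \<bullet> u) - f u)" and ninf: "\<alpha> \<noteq> \<infinity>"
  shows "\<exists>z1. \<alpha> = fconj f z1 + (SUP u\<in>G. ereal ((z - z1) \<bullet> u))"
proof -
  have u0e: "u0 \<in> edom f" using u0f rel_interior_subset by blast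
  have u0g: "u0 \<in> G" using u0G rel_interior_subset by blast
  obtain r0 where r0: "f u0 = ereal r0"
    using u0e fin[of u0] unfolding edom_def by (cases "f u0") auto
  have "ereal (z \<bullet> u0 - r0) \<le> \<alpha>"
    unfolding al using u0g r0 SUP_upper[of u0 G "\<lambda>u. ereal (z \<bullet> u) - f u"] by simp
  then obtain ar where ar: "\<alpha> = ereal ar" using ninf by (cases \<alpha>) auto
  define L :: "('a \<times> real) \<times> 'a \<Rightarrow> 'a \<times> real" where
    "L p = (fst (fst p) - snd p, snd (fst p) - z \<bullet> fst (fst p))" for p
  have lin: "linear L"
    by (rule linearI) (auto simp: L_def algebra_simps inner_add_right)
  define W where "W = L ` (epi f \<times> G)"
  obtain Cf where Cf: "convex Cf" "Cf \<subseteq> epi f" "epi f \<subseteq> closure Cf"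
    using ncf unfolding nearly_convex_def by blast
  obtain CG where CG: "convex CG" "CG \<subseteq> G" "G \<subseteq> closure CG"
    using ncG unfolding nearly_convex_def by blast
  define Wc where "Wc = L ` (Cf \<times> CG)"
  have cWc: "convex Wc" unfolding Wc_def
    by (rule convex_linear_image[OF lin convex_Times[OF Cf(1) CG(1)]])
  have WcW: "Wc \<subseteq> W" unfolding Wc_def W_def using Cf CG by blast
  have WclWc: "W \<subseteq> closure Wc"
  proof -
    have "W \<subseteq> L ` (closure Cf \<times> closure CG)" unfolding W_def using Cf CG by blast
    also have "\<dots> = L ` closure (Cf \<times> CG)" by (simp add: closure_Times)
    also have "\<dots> \<subseteq> closure Wc" unfolding Wc_def by (rule closure_linear_image_subset[OF lin])
    finally show ?thesis .
  qed
  have memW: "L ((u, s), v) \<in> W" if "f u \<le> ereal s" "v \<in> G" for u s v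
    unfolding W_def using that by (auto simp: epi_def)
  have Wmem: "\<exists>u s v. f u \<le> ereal s \<and> v \<in> G \<and> q = L ((u, s), v)" if "q \<in> W" for q
    using that unfolding W_def epi_def by auto
  define p0 where "p0 = ((0::'a), - ar)"
  have p0cl: "p0 \<in> closure Wc"
  proof -
    have "p0 \<in> closure W"
      unfolding closure_approachable
    proof (intro allI impI)
      fix e :: real assume e: "e > 0"
      have "ereal (ar - e) < \<alpha>" using ar e by simp
      then obtain u where u: "u \<in> G" "ereal (ar - e) < ereal (z \<bullet> u) - f u"
        unfolding al less_SUP_iff by blast
      then obtain r where r: "f u = ereal r" using fin[of u] by (cases "f u") auto
      have "ereal (z \<bullet> u) - f u \<le> \<alpha>" unfolding al using u(1) by (rule SUP_upper)
      then have le: "z \<bullet> u - r \<le> ar" using ar r by simp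
      have gt: "ar - e < z \<bullet> u - r" using u(2) r by simp
      have "L ((u, r), u) \<in> W" using r u by (intro memW) auto
      moreover have "dist (L ((u, r), u)) p0 < e"
        using le gt by (simp add: L_def p0_def dist_Pair_Pair dist_real_def)
      ultimately show "\<exists>x\<in>W. dist x p0 < e" by blast
    qed
    moreover have "closure W \<subseteq> closure Wc"
      using WclWc by (simp add: closure_minimal)
    ultimately show ?thesis by blast
  qed
  have p0nri: "p0 \<notin> rel_interior Wc"
  proof
    assume p0ri: "p0 \<in> rel_interior Wc"
    then obtain e where e: "e > 0" "ball p0 e \<inter> affine hull Wc \<subseteq> Wc"
      using mem_rel_interior_ball by blast
    have p0Wc: "p0 \<in> Wc" using p0ri rel_interior_subset by blast
    then obtain u s v where usv: "f u \<le> ereal s" "v \<in> G" "p0 = L ((u, s), v)"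
      using Wmem WcW by blast
    have "L ((u, s + 1), v) \<in> W" using usv by (intro memW) (auto intro: order_trans)
    then have "L ((u, s + 1), v) \<in> affine hull (closure Wc)" by (rule hull_inc[OF subsetD[OF WclWc]])
    then have p1: "p0 + (0, 1) \<in> affine hull Wc" using usv by (simp add: L_def algebra_simps)
    define q where "q = (1 + e/2) *\<^sub>R p0 + (- (e/2)) *\<^sub>R (p0 + (0, 1))"
    have "q \<in> affine hull Wc" unfolding q_def
      by (rule mem_affine[OF affine_affine_hull]) (use p1 p0Wc hull_inc in auto)
    moreover have qv: "q = (0, - ar - e/2)" unfolding q_def p0_def by (simp add: algebra_simps, simp add: field_simps)
    moreover have "dist p0 (0, - ar - e/2) < e" using e by (simp add: p0_def dist_Pair_Pair dist_real_def)
    ultimately have "q \<in> Wc" using e by auto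
    then obtain u s v where usv: "f u \<le> ereal s" "v \<in> G" "(0, - ar - e/2) = L ((u, s), v)"
      using Wmem WcW qv by blast
    then have uv: "u = v" and s: "s - z \<bullet> u = - ar - e/2" by (auto simp: L_def)
    have "ereal (z \<bullet> u) - f u \<le> \<alpha>" unfolding al using usv(2) uv by (auto intro: SUP_upper)
    moreover have "ereal (z \<bullet> u - s) \<le> ereal (z \<bullet> u) - f u"
      using usv(1) by (metis ereal_minus_mono ereal_minus(1) order_refl)
    ultimately have "z \<bullet> u - s \<le> ar" using ar by (metis ereal_less_eq(3) order_trans)
    then show False using s e by simp
  qed
  obtain a where a: "a \<noteq> 0" "\<And>y. y \<in> closure Wc \<Longrightarrow> a \<bullet> p0 \<le> a \<bullet> y"
    "\<And>y. y \<in> rel_interior Wc \<Longrightarrow> a \<bullet> p0 < a \<bullet> y"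
    using supporting_hyperplane_relative_frontier[OF cWc p0cl p0nri] by blast
  obtain y' c where yc: "a = (y', c)" by (cases a)
  have H: "- c * ar \<le> y' \<bullet> (u - v) + c * (s - z \<bullet> u)" if "f u \<le> ereal s" "v \<in> G" for u s v
    using a(2)[of "L ((u, s), v)"] memW[OF that] WclWc
    by (auto simp: yc p0_def L_def inner_Pair)
  have c0: "c \<ge> 0"
  proof (rule ccontr)
    assume "\<not> c \<ge> 0" then have c: "c < 0" by simp
    define K where "K = - ar - (r0 - z \<bullet> u0)"
    define k where "k = \<bar>K\<bar> + 1"
    have "- c * ar \<le> y' \<bullet> (u0 - u0) + c * ((r0 + k) - z \<bullet> u0)"
      using r0 u0g by (intro H) (auto simp: k_def)
    then have "c * K \<le> c * k" by (simp add: K_def algebra_simps)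
    moreover have "c * k < c * K" using c by (intro mult_strict_left_mono_neg) (auto simp: k_def)
    ultimately show False by simp
  qed
  have cne: "c \<noteq> 0"
  proof
    assume c: "c = 0"
    have sep: "y' \<bullet> v \<le> y' \<bullet> u" if uv: "u \<in> edom f" "v \<in> G" for u v
    proof -
      obtain r where "f u = ereal r" using uv(1) fin[of u] unfolding edom_def by (cases "f u") auto
      then show ?thesis using H[of u r v] uv c by (simp add: inner_diff_right)
    qed
    have cu: "y' \<bullet> u = y' \<bullet> u0" if "u \<in> edom f" for u
      using ri_min_const[OF u0f _ that, of y'] sep u0g by blast
    have cv: "(- y') \<bullet> v = (- y') \<bullet> u0" if "v \<in> G" for v
      using ri_min_const[OF u0G _ that, of "- y'"] sep u0e by simp
    have "Wc \<noteq> {}" using p0cl by auto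
    then obtain q where q: "q \<in> rel_interior Wc" using rel_interior_eq_empty[OF cWc] by blast
    then have "q \<in> W" using WcW rel_interior_subset by blast
    then obtain u s v where usv: "f u \<le> ereal s" "v \<in> G" "q = L ((u, s), v)" using Wmem by blast
    have "f u < \<infinity>" using usv(1) by (cases "f u") auto
    then have "u \<in> edom f" unfolding edom_def by simp
    then have "a \<bullet> q = 0" using cu cv usv c by (simp add: yc L_def inner_Pair inner_diff_right)
    moreover have "a \<bullet> p0 = 0" by (simp add: yc p0_def c inner_Pair)
    ultimately show False using a(3)[OF q] by simp
  qed
  have cpos: "c > 0" using c0 cne by simp
  define z2 where "z2 = (1/c) *\<^sub>R y'"
  define z1 where "z1 = z - z2"
  have key: "z1 \<bullet> u - r + z2 \<bullet> v \<le> ar" if "f u = ereal r" "v \<in> G" for u r v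
  proof -
    have "- c * ar \<le> y' \<bullet> (u - v) + c * (r - z \<bullet> u)" using H[of u r v] that by simp
    then have "- ar \<le> (y' \<bullet> (u - v)) / c + (r - z \<bullet> u)"
      using cpos by (simp add: field_simps)
    then have "- ar \<le> z2 \<bullet> (u - v) + (r - z \<bullet> u)"
      by (simp add: z2_def)
    then show ?thesis by (simp add: z1_def inner_diff_left inner_diff_right)
  qed
  have fcb: "fconj f z1 \<le> ereal (ar - z2 \<bullet> v)" if "v \<in> G" for v
    unfolding fconj_def
  proof (rule SUP_least)
    fix x
    show "ereal (z1 \<bullet> x) - f x \<le> ereal (ar - z2 \<bullet> v)"
    proof (cases "f x")
      case (real r) then show ?thesis using key[OF real that] by simp
    qed (use fin[of x] in auto)
  qed
  have "ereal (z1 \<bullet> u0) - f u0 \<le> fconj f z1" unfolding fconj_def by (rule SUP_upper) simp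
  then obtain b where b: "fconj f z1 = ereal b"
    using fcb[OF u0g] r0 by (cases "fconj f z1") auto
  have "(SUP u\<in>G. ereal (z2 \<bullet> u)) \<le> ereal (ar - b)"
    by (rule SUP_least) (use fcb b in \<open>fastforce simp: algebra_simps\<close>)
  then have le: "fconj f z1 + (SUP u\<in>G. ereal (z2 \<bullet> u)) \<le> \<alpha>"
    using b ar by (metis add_left_mono plus_ereal.simps(1) add.commute diff_add_cancel)
  have ge: "\<alpha> \<le> fconj f z1 + (SUP u\<in>G. ereal (z2 \<bullet> u))"
    unfolding al by (rule weak_dual[OF fin]) (simp add: z1_def)
  have "z - z1 = z2" by (simp add: z1_def)
  then show ?thesis using le ge by (intro exI[of _ z1]) auto
qed


theorem theorem6p3:
  fixes f :: "(real^('n::finite)) \<times> (real^('p::finite)) \<Rightarrow> ereal"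
    and F :: "real^'n \<Rightarrow> (real^'p) set"
    and \<mu> :: "real^'n \<Rightarrow> ereal"
  assumes "proper_fun f"
    and "nearly_convex_fun f"
    and "nearly_convex (gph F)"
    and "rel_interior (edom f) \<inter> rel_interior (gph F) \<noteq> {}"
    and "\<And>x. \<mu> x = (INF y \<in> F x. f (x, y))"
  shows "\<forall>w. fconj \<mu> w = infconv (fconj f) (sv_conj F) (w, 0)
           \<and> fconj \<mu> w = (INF q \<in> {((w1, v1), (w2, v2)). w1 + w2 = w \<and> v1 + v2 = 0}.
                              fconj f (fst q) + sv_conj F (snd q))
           \<and> (\<bar>fconj \<mu> w\<bar> \<noteq> \<infinity> \<longrightarrow>
           (\<exists>w1 w2 v. w1 + w2 = w \<and> fconj \<mu> w = fconj f (w1, v) + sv_conj F (w2, - v)))"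
proof
  fix w :: "real^'n"
  have fin: "\<And>x. f x > -\<infinity>" using assms(1) unfolding proper_fun_def by blast
  have ncf: "nearly_convex (epi f)" using assms(2) unfolding nearly_convex_fun_def .
  obtain u0 where u0f: "u0 \<in> rel_interior (edom f)" and u0G: "u0 \<in> rel_interior (gph F)"
    using assms(4) by blast
  define G where "G = gph F"
  define z where "z = (w, 0::real^'p)"
  define \<alpha> where "\<alpha> = (SUP u\<in>G. ereal (z \<bullet> u) - f u)"
  have svc: "sv_conj F uv = (SUP u\<in>G. ereal (uv \<bullet> u))" for uv
    by (simp add: sv_conj_def G_def)
  have u0e: "u0 \<in> edom f" using u0f rel_interior_subset by blast
  have u0g: "u0 \<in> G" using u0G rel_interior_subset G_def by blast
  obtain r0 where r0: "f u0 = ereal r0"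
    using u0e fin[of u0] unfolding edom_def by (cases "f u0") auto
  have "ereal (z \<bullet> u0 - r0) \<le> \<alpha>"
    unfolding \<alpha>_def using u0g r0 SUP_upper[of u0 G "\<lambda>u. ereal (z \<bullet> u) - f u"] by simp
  then have anm: "\<alpha> \<noteq> -\<infinity>" by auto
  have mu: "fconj \<mu> w = \<alpha>"
  proof (rule antisym)
    show "fconj \<mu> w \<le> \<alpha>"
      unfolding fconj_def
    proof (rule SUP_least)
      fix x
      show "ereal (w \<bullet> x) - \<mu> x \<le> \<alpha>"
      proof (cases "\<alpha> = \<infinity>")
        case True then show ?thesis by simp
      next
        case False
        then obtain ar where ar: "\<alpha> = ereal ar" using anm by (cases \<alpha>) auto
        have "ereal (w \<bullet> x - ar) \<le> \<mu> x"
          unfolding assms(5)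
        proof (rule INF_greatest)
          fix y assume y: "y \<in> F x"
          have "ereal (z \<bullet> (x, y)) - f (x, y) \<le> \<alpha>"
            unfolding \<alpha>_def by (rule SUP_upper) (use y in \<open>simp add: G_def gph_def\<close>)
          then have "ereal (w \<bullet> x) - f (x, y) \<le> ereal ar" by (simp add: z_def inner_Pair ar)
          then show "ereal (w \<bullet> x - ar) \<le> f (x, y)"
            using fin[of "(x,y)"] by (cases "f (x,y)") auto
        qed
        then show ?thesis using ar by (cases "\<mu> x") auto
      qed
    qed
    show "\<alpha> \<le> fconj \<mu> w"
      unfolding \<alpha>_def
    proof (rule SUP_least)
      fix u assume u: "u \<in> G"
      obtain x y where xy: "u = (x, y)" by (cases u)
      have y: "y \<in> F x" using u xy by (simp add: G_def gph_def)
      have "\<mu> x \<le> f (x, y)" unfolding assms(5) using y by (rule INF_lower)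
      then have "ereal (w \<bullet> x) - f (x, y) \<le> ereal (w \<bullet> x) - \<mu> x"
        by (rule ereal_minus_mono[OF order_refl])
      also have "\<dots> \<le> fconj \<mu> w" unfolding fconj_def by (rule SUP_upper) simp
      finally show "ereal (z \<bullet> u) - f u \<le> fconj \<mu> w" by (simp add: xy z_def inner_Pair)
    qed
  qed
  have weak: "\<alpha> \<le> fconj f z1 + sv_conj F z2" if "z1 + z2 = z" for z1 z2
    unfolding svc \<alpha>_def by (rule weak_dual[OF fin that])
  have ex: "\<exists>z1. \<alpha> = fconj f z1 + sv_conj F (z - z1)" if "\<alpha> \<noteq> \<infinity>"
    unfolding svc
    by (rule main_exact[OF fin ncf assms(3)[folded G_def] u0f u0G[folded G_def] \<alpha>_def that])
  have setq: "{((w1, v1), (w2, v2)). w1 + w2 = w \<and> v1 + v2 = 0} = {(z1, z2). z1 + z2 = z}"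
    by (auto simp: z_def)
  have inf: "infconv (fconj f) (sv_conj F) z = \<alpha>"
    unfolding infconv_def
  proof (rule antisym)
    show "\<alpha> \<le> (INF p\<in>{(z1, z2). z1 + z2 = z}. fconj f (fst p) + sv_conj F (snd p))"
      by (rule INF_greatest) (auto intro: weak)
    show "(INF p\<in>{(z1, z2). z1 + z2 = z}. fconj f (fst p) + sv_conj F (snd p)) \<le> \<alpha>"
    proof (cases "\<alpha> = \<infinity>")
      case True then show ?thesis by simp
    next
      case False
      then obtain z1 where "\<alpha> = fconj f z1 + sv_conj F (z - z1)" using ex by blast
      then show ?thesis by (intro INF_lower2[of "(z1, z - z1)"]) auto
    qed
  qed
  have last: "\<exists>w1 w2 v. w1 + w2 = w \<and> fconj \<mu> w = fconj f (w1, v) + sv_conj F (w2, - v)"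
    if "\<bar>fconj \<mu> w\<bar> \<noteq> \<infinity>"
  proof -
    have "\<alpha> \<noteq> \<infinity>" using that mu by auto
    then obtain z1 where e: "\<alpha> = fconj f z1 + sv_conj F (z - z1)" using ex by blast
    obtain w1 v where z1: "z1 = (w1, v)" by (cases z1)
    have "z - z1 = (w - w1, - v)" by (simp add: z_def z1)
    then show ?thesis using e mu z1 by (intro exI[of _ w1] exI[of _ "w - w1"] exI[of _ v]) auto
  qed
  show "fconj \<mu> w = infconv (fconj f) (sv_conj F) (w, 0)
           \<and> fconj \<mu> w = (INF q \<in> {((w1, v1), (w2, v2)). w1 + w2 = w \<and> v1 + v2 = 0}.
                              fconj f (fst q) + sv_conj F (snd q))
           \<and> (\<bar>fconj \<mu> w\<bar> \<noteq> \<infinity> \<longrightarrow>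
           (\<exists>w1 w2 v. w1 + w2 = w \<and> fconj \<mu> w = fconj f (w1, v) + sv_conj F (w2, - v)))"
    using mu inf last setq unfolding infconv_def z_def by simp
qed

end
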